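(* Let $(M,d)$ be a complete pointed metric space with $\gamma(M)>1$, where $\gamma(M)=\inf\{\frac{d(x,u)+d(u,y)}{d(x,y)}: x,u,y\in M\text{ distinct}\}$. Then every positive Radon measure $\mu$ on $\beta\widetilde{M}$ with $\|\mu\|=\|\Phi^*\mu\|$ is $\preccurlyeq$-minimal.
   Context: $\mathrm{Lip}_0(M)$: Lipschitz $f:M\to\mathbb{R}$ with $f(0)=0$ ($0$ the base point) normed by the Lipschitz constant. $\widetilde{M}=\{(x,y)\in M\times M:x\ne y\}$, $\beta\widetilde{M}$ its Stone–Čech compactification; Radon measures identified with $C(\beta\widetilde{M})^*$. $\Phi:\mathrm{Lip}_0(M)\to C(\beta\widetilde{M})$ maps $f$ to the continuous extension of $(x,y)\mapsto(f(x)-f(y))/d(x,y)$; $\Phi^*$ its adjoint. $G$ is the set of $g\in C(\beta\widetilde{M})$ with $d(x,y)g(x,y)\le d(x,u)g(x,u)+d(u,y)g(u,y)$ for all distinct $x,u,y\in M$; $\mu\preccurlyeq\nu$ iff $\int g\,d\mu\le\int g\,d\nu$ for all $g\in G$; $\mu$ is $\preccurlyeq$-minimal if every positive $\nu\preccurlyeq\mu$ satisfies $\mu\preccurlyeq\nu$. Throughout, $M$ has at least three distinct points. *)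

theory Defs
  imports "HOL-Analysis.Analysis"
begin

text \<open>C(beta Mtilde) is represented isometrically and order-isomorphically by the bounded
  continuous real functions on Mtilde (restriction map); we use canonical
  representatives vanishing off Mtilde. A Radon measure on beta Mtilde is a bounded
  linear functional on this space; its integral of g is the value mu g.\<close>

definition offdiag :: "('a \<times> 'a) set" where
  "offdiag = {(x, y). x \<noteq> y}"

definition Cb :: "('a::metric_space \<times> 'a \<Rightarrow> real) set" where
  "Cb = {g. continuous_on offdiag g \<and> bounded (g ` offdiag) \<and>
            (\<forall>z. z \<notin> offdiag \<longrightarrow> g z = 0)}"

definition supnorm :: "('a \<times> 'a \<Rightarrow> real) \<Rightarrow> real" where
  "supnorm g = (SUP z\<in>offdiag. \<bar>g z\<bar>)"

definition radon_functional :: "(('a::metric_space \<times> 'a \<Rightarrow> real) \<Rightarrow> real) \<Rightarrow> bool" where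
  "radon_functional mu \<longleftrightarrow>
     (\<forall>f\<in>Cb. \<forall>g\<in>Cb. \<forall>a b::real. mu (\<lambda>z. a * f z + b * g z) = a * mu f + b * mu g) \<and>
     (\<exists>C. \<forall>g\<in>Cb. \<bar>mu g\<bar> \<le> C * supnorm g)"

definition positive_functional :: "(('a::metric_space \<times> 'a \<Rightarrow> real) \<Rightarrow> real) \<Rightarrow> bool" where
  "positive_functional mu \<longleftrightarrow> (\<forall>g\<in>Cb. (\<forall>z\<in>offdiag. 0 \<le> g z) \<longrightarrow> 0 \<le> mu g)"

definition fnorm :: "(('a::metric_space \<times> 'a \<Rightarrow> real) \<Rightarrow> real) \<Rightarrow> real" where
  "fnorm mu = (SUP g\<in>{g\<in>Cb. supnorm g \<le> 1}. \<bar>mu g\<bar>)"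

definition Phi :: "('a::metric_space \<Rightarrow> real) \<Rightarrow> ('a \<times> 'a \<Rightarrow> real)" where
  "Phi f = (\<lambda>(x, y). if x = y then 0 else (f x - f y) / dist x y)"

definition Lip0 :: "'a::metric_space \<Rightarrow> ('a \<Rightarrow> real) set" where
  "Lip0 x0 = {f. f x0 = 0 \<and> (\<exists>L. \<forall>x y. \<bar>f x - f y\<bar> \<le> L * dist x y)}"

definition lip_const :: "('a::metric_space \<Rightarrow> real) \<Rightarrow> real" where
  "lip_const f = (SUP (x, y)\<in>offdiag. \<bar>f x - f y\<bar> / dist x y)"

text \<open>Norm of Phi^* mu in the dual of Lip_0(M): (Phi^* mu) f = mu (Phi f).\<close>
definition adj_norm :: "'a::metric_space \<Rightarrow> (('a \<times> 'a \<Rightarrow> real) \<Rightarrow> real) \<Rightarrow> real" where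
  "adj_norm x0 mu = (SUP f\<in>{f\<in>Lip0 x0. lip_const f \<le> 1}. \<bar>mu (Phi f)\<bar>)"

definition gamma_M :: "'a::metric_space itself \<Rightarrow> real" where
  "gamma_M _ = Inf {(dist x u + dist u y) / dist x y | x u y :: 'a.
                      x \<noteq> u \<and> u \<noteq> y \<and> x \<noteq> y}"

definition Gset :: "('a::metric_space \<times> 'a \<Rightarrow> real) set" where
  "Gset = {g\<in>Cb. \<forall>x u y. x \<noteq> u \<and> u \<noteq> y \<and> x \<noteq> y \<longrightarrow>
             dist x y * g (x, y) \<le> dist x u * g (x, u) + dist u y * g (u, y)}"

definition preceq :: "(('a::metric_space \<times> 'a \<Rightarrow> real) \<Rightarrow> real) \<Rightarrow> (('a \<times> 'a \<Rightarrow> real) \<Rightarrow> real) \<Rightarrow> bool" where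
  "preceq mu nu \<longleftrightarrow> (\<forall>g\<in>Gset. mu g \<le> nu g)"

definition preceq_minimal :: "(('a::metric_space \<times> 'a \<Rightarrow> real) \<Rightarrow> real) \<Rightarrow> bool" where
  "preceq_minimal mu \<longleftrightarrow>
     (\<forall>nu. radon_functional nu \<and> positive_functional nu \<and> preceq nu mu \<longrightarrow> preceq mu nu)"

end

theory Submission
  imports Defs
begin

definition ind1 :: "('a::metric_space \<times> 'a) \<Rightarrow> real" where
  "ind1 z = (if z \<in> offdiag then 1 else 0)"

lemma ex_in_nonempty: "x \<in> S \<Longrightarrow> S \<noteq> {}" by auto

lemma Cb_bound:
  assumes "g \<in> Cb" shows "\<exists>B. \<forall>z. \<bar>g z\<bar> \<le> B"
proof -
  from assms have b: "bounded (g ` offdiag)" and z: "\<And>z. z \<notin> offdiag \<Longrightarrow> g z = 0"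
    unfolding Cb_def by blast+
  from b obtain B where B: "\<forall>x\<in>g ` offdiag. norm x \<le> B" by (auto simp: bounded_iff)
  have "\<forall>z. \<bar>g z\<bar> \<le> max B 0"
  proof
    fix z show "\<bar>g z\<bar> \<le> max B 0"
    proof (cases "z \<in> offdiag")
      case True then show ?thesis using B by fastforce
    next
      case False then show ?thesis using z by simp
    qed
  qed
  then show ?thesis by blast
qed

lemma Cb_lin:
  assumes "f \<in> Cb" "g \<in> Cb" shows "(\<lambda>z. a * f z + b * g z) \<in> Cb"
proof -
  obtain B1 where B1: "\<And>z. \<bar>f z\<bar> \<le> B1" using Cb_bound[OF assms(1)] by blast
  obtain B2 where B2: "\<And>z. \<bar>g z\<bar> \<le> B2" using Cb_bound[OF assms(2)] by blast
  have "continuous_on offdiag f" "continuous_on offdiag g" using assms unfolding Cb_def by blast+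
  then have c: "continuous_on offdiag (\<lambda>z. a * f z + b * g z)"
    by (intro continuous_on_add continuous_on_mult continuous_on_const)
  have bnd: "\<bar>a * f z + b * g z\<bar> \<le> \<bar>a\<bar> * B1 + \<bar>b\<bar> * B2" for z
  proof -
    have "\<bar>a * f z + b * g z\<bar> \<le> \<bar>a\<bar> * \<bar>f z\<bar> + \<bar>b\<bar> * \<bar>g z\<bar>"
      by (metis abs_mult abs_triangle_ineq)
    also have "\<dots> \<le> \<bar>a\<bar> * B1 + \<bar>b\<bar> * B2"
      using B1[of z] B2[of z] by (intro add_mono mult_left_mono) auto
    finally show "\<bar>a * f z + b * g z\<bar> \<le> \<bar>a\<bar> * B1 + \<bar>b\<bar> * B2" .
  qed
  then have "bounded ((\<lambda>z. a * f z + b * g z) ` offdiag)"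
    unfolding bounded_iff by (intro exI[of _ "\<bar>a\<bar> * B1 + \<bar>b\<bar> * B2"]) (simp add: bnd)
  with c assms show ?thesis by (auto simp: Cb_def)
qed

lemma lin:
  assumes "radon_functional mu" "f \<in> Cb" "g \<in> Cb"
  shows "mu (\<lambda>z. a * f z + b * g z) = a * mu f + b * mu g"
  using assms by (auto simp: radon_functional_def)

lemma offdiag_iff[simp]: "(x, y) \<in> offdiag \<longleftrightarrow> x \<noteq> y"
  by (auto simp: offdiag_def)

lemma one_Cb: "(ind1 :: 'a::metric_space \<times> 'a \<Rightarrow> real) \<in> Cb"
proof -
  have c1: "continuous_on offdiag (\<lambda>z::'a\<times>'a. 1::real)" by simp
  have "continuous_on offdiag (ind1 :: 'a \<times> 'a \<Rightarrow> real)"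
    by (rule continuous_on_eq[OF c1]) (simp add: ind1_def)
  moreover have "bounded (ind1 ` offdiag)"
    by (auto simp: bounded_iff ind1_def intro!: exI[of _ 1])
  ultimately show ?thesis by (auto simp: Cb_def ind1_def)
qed

lemma one_G: "ind1 \<in> Gset"
  using one_Cb by (auto simp: Gset_def ind1_def dist_triangle)

lemma supnorm_le:
  assumes "g \<in> Cb" "z \<in> offdiag" shows "\<bar>g z\<bar> \<le> supnorm g"
proof -
  obtain B where B: "\<And>z. \<bar>g z\<bar> \<le> B" using Cb_bound[OF assms(1)] by blast
  have "bdd_above ((\<lambda>z. \<bar>g z\<bar>) ` offdiag)" by (rule bdd_aboveI[of _ B]) (use B in auto)
  then show ?thesis unfolding supnorm_def by (rule cSUP_upper2[OF _ assms(2)]) simp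
qed

lemma pos_apply:
  assumes "positive_functional nu" "g \<in> Cb" "\<forall>z\<in>offdiag. 0 \<le> g z"
  shows "0 \<le> nu g"
  using assms unfolding positive_functional_def by simp

lemma pos_bound:
  fixes g :: "'a::metric_space \<times> 'a \<Rightarrow> real"
  assumes "radon_functional nu" "positive_functional nu" "g \<in> Cb" "supnorm g \<le> 1"
  shows "\<bar>nu g\<bar> \<le> nu ind1"
proof -
  have h: "\<bar>g z\<bar> \<le> 1" if "z \<in> offdiag" for z
    using supnorm_le[OF assms(3) that] assms(4) by linarith
  have m1: "(\<lambda>z. 1 * ind1 z + (-1) * g z) \<in> Cb" by (rule Cb_lin[OF one_Cb assms(3)])
  have m2: "(\<lambda>z. 1 * ind1 z + 1 * g z) \<in> Cb" by (rule Cb_lin[OF one_Cb assms(3)])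
  have p1: "\<forall>z\<in>offdiag. 0 \<le> 1 * ind1 z + (-1) * g z"
  proof
    fix z :: "'a \<times> 'a" assume z: "z \<in> offdiag"
    have "ind1 z = 1" using z by (simp add: ind1_def)
    moreover have "g z \<le> 1" using h[OF z] by (simp add: abs_le_iff)
    ultimately show "0 \<le> 1 * ind1 z + (-1) * g z" by linarith
  qed
  have p2: "\<forall>z\<in>offdiag. 0 \<le> 1 * ind1 z + 1 * g z"
  proof
    fix z :: "'a \<times> 'a" assume z: "z \<in> offdiag"
    have "ind1 z = 1" using z by (simp add: ind1_def)
    moreover have "- 1 \<le> g z" using h[OF z] by (simp add: abs_le_iff)
    ultimately show "0 \<le> 1 * ind1 z + 1 * g z" by linarith
  qed
  have "0 \<le> nu (\<lambda>z. 1 * ind1 z + (-1) * g z)"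
    by (rule pos_apply[OF assms(2) m1 p1])
  moreover have "0 \<le> nu (\<lambda>z. 1 * ind1 z + 1 * g z)"
    by (rule pos_apply[OF assms(2) m2 p2])
  moreover have "nu (\<lambda>z. 1 * ind1 z + (-1) * g z) = 1 * nu ind1 + (-1) * nu g"
    by (rule lin[OF assms(1) one_Cb assms(3)])
  moreover have "nu (\<lambda>z. 1 * ind1 z + 1 * g z) = 1 * nu ind1 + 1 * nu g"
    by (rule lin[OF assms(1) one_Cb assms(3)])
  ultimately show ?thesis by linarith
qed

lemma fnorm_le:
  fixes nu :: "('a::metric_space \<times> 'a \<Rightarrow> real) \<Rightarrow> real"
  assumes "radon_functional nu" "positive_functional nu" "offdiag \<noteq> ({} :: ('a \<times> 'a) set)"
  shows "fnorm nu \<le> nu ind1"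
  unfolding fnorm_def
proof (rule cSUP_least)
  have "(\<lambda>z. 0 * ind1 z + 0 * ind1 z) \<in> Cb" by (rule Cb_lin[OF one_Cb one_Cb])
  moreover have "supnorm (\<lambda>z::'a\<times>'a. 0 * ind1 z + 0 * ind1 z) \<le> 1"
    using assms(3) by (simp add: supnorm_def)
  ultimately have "(\<lambda>z::'a\<times>'a. 0 * ind1 z + 0 * ind1 z) \<in> {g \<in> Cb. supnorm g \<le> 1}" by simp
  then show "{g \<in> Cb. supnorm g \<le> 1} \<noteq> ({} :: ('a \<times> 'a \<Rightarrow> real) set)" by (rule ex_in_nonempty)
next
  fix g :: "'a \<times> 'a \<Rightarrow> real" assume "g \<in> {g \<in> Cb. supnorm g \<le> 1}"
  then have "g \<in> Cb" "supnorm g \<le> 1" by auto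
  then show "\<bar>nu g\<bar> \<le> nu ind1" by (rule pos_bound[OF assms(1,2)])
qed

lemma fnorm_ge:
  assumes "radon_functional nu" "positive_functional nu" "g \<in> Cb" "supnorm g \<le> 1"
  shows "\<bar>nu g\<bar> \<le> fnorm nu"
  unfolding fnorm_def
proof (rule cSUP_upper)
  show "g \<in> {g \<in> Cb. supnorm g \<le> 1}" using assms(3,4) by simp
  show "bdd_above ((\<lambda>g. \<bar>nu g\<bar>) ` {g \<in> Cb. supnorm g \<le> 1})"
  proof (rule bdd_aboveI[of _ "nu ind1"])
    fix x assume "x \<in> (\<lambda>g. \<bar>nu g\<bar>) ` {g \<in> Cb. supnorm g \<le> 1}"
    then obtain h where "h \<in> Cb" "supnorm h \<le> 1" "x = \<bar>nu h\<bar>" by auto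
    then show "x \<le> nu ind1" using pos_bound[OF assms(1,2), of h] by simp
  qed
qed

lemma Phi_Cb:
  fixes f :: "'a::metric_space \<Rightarrow> real"
  assumes "\<forall>x y. \<bar>f x - f y\<bar> \<le> L * dist x y"
  shows "Phi f \<in> Cb"
proof -
  have L: "\<bar>f x - f y\<bar> \<le> max L 0 * dist x y" for x y
  proof -
    have "L * dist x y \<le> max L 0 * dist x y" by (intro mult_right_mono) auto
    then show ?thesis using assms[rule_format, of x y] by linarith
  qed
  have "lipschitz_on (max L 0) UNIV f"
    by (rule lipschitz_onI) (use L in \<open>auto simp: dist_real_def\<close>)
  then have cf: "continuous_on UNIV f" by (rule lipschitz_on_continuous_on)
  have cf1: "continuous_on offdiag (\<lambda>z. f (fst z))"
    by (rule continuous_on_compose2[OF cf continuous_on_fst[OF continuous_on_id]]) simp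
  have cf2: "continuous_on offdiag (\<lambda>z. f (snd z))"
    by (rule continuous_on_compose2[OF cf continuous_on_snd[OF continuous_on_id]]) simp
  have cd: "continuous_on offdiag (\<lambda>z::'a\<times>'a. dist (fst z) (snd z))"
    by (intro continuous_intros)
  have "continuous_on offdiag (\<lambda>z. (f (fst z) - f (snd z)) / dist (fst z) (snd z))"
    by (rule continuous_on_divide[OF continuous_on_diff[OF cf1 cf2] cd]) (auto simp: offdiag_def)
  then have c: "continuous_on offdiag (Phi f)"
    by (rule continuous_on_eq) (auto simp: Phi_def offdiag_def)
  have bnd: "\<bar>Phi f z\<bar> \<le> max L 0" for z
  proof (cases z)
    case (Pair x y)
    show ?thesis
    proof (cases "x = y")
      case False
      then have "dist x y > 0" by simp
      then show ?thesis using L[of x y] Pair False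
        by (simp add: Phi_def abs_divide divide_le_eq)
    qed (simp add: Pair Phi_def)
  qed
  then have "bounded (Phi f ` offdiag)"
    unfolding bounded_iff by (intro exI[of _ "max L 0"]) simp
  moreover have "\<forall>z. z \<notin> offdiag \<longrightarrow> Phi f z = 0" by (auto simp: Phi_def offdiag_def)
  ultimately show ?thesis using c by (simp add: Cb_def)
qed

lemma supnorm_Phi: "supnorm (Phi f) = lip_const f"
  unfolding supnorm_def lip_const_def
  by (rule SUP_cong) (auto simp: Phi_def abs_divide)

lemma Phi_G:
  assumes "Phi f \<in> Cb" shows "Phi f \<in> Gset"
  using assms by (auto simp: Gset_def Phi_def)

lemma negPhi_G:
  assumes "Phi f \<in> Cb" shows "(\<lambda>z. (-1) * Phi f z + 0 * Phi f z) \<in> Gset"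
  using assms Cb_lin[OF assms assms, of "-1" 0] by (auto simp: Gset_def Phi_def)

lemma gamma_le:
  fixes x u y :: "'a::metric_space"
  assumes "x \<noteq> u" "u \<noteq> y" "x \<noteq> y"
  shows "gamma_M TYPE('a) \<le> (dist x u + dist u y) / dist x y"
  unfolding gamma_M_def
proof (rule cInf_lower)
  show "(dist x u + dist u y) / dist x y \<in> {(dist x u + dist u y) / dist x y | x u y :: 'a.
                      x \<noteq> u \<and> u \<noteq> y \<and> x \<noteq> y}" using assms by blast
  show "bdd_below {(dist x u + dist u y) / dist x y | x u y :: 'a.
                      x \<noteq> u \<and> u \<noteq> y \<and> x \<noteq> y}"
    by (rule bdd_belowI[of _ 0]) auto
qed

theorem corollary3p18:
  fixes x0 :: "'a::complete_space"
    and mu :: "('a \<times> 'a \<Rightarrow> real) \<Rightarrow> real"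
  assumes "\<exists>x u y :: 'a. x \<noteq> u \<and> u \<noteq> y \<and> x \<noteq> y"
    and "gamma_M TYPE('a) > 1"
    and "radon_functional mu"
    and "positive_functional mu"
    and "fnorm mu = adj_norm x0 mu"
  shows "preceq_minimal mu"
  unfolding preceq_minimal_def
proof (intro allI impI)
  fix nu :: "('a \<times> 'a \<Rightarrow> real) \<Rightarrow> real"
  assume "radon_functional nu \<and> positive_functional nu \<and> preceq nu mu"
  then have rn: "radon_functional nu" and pn: "positive_functional nu" and le: "preceq nu mu"
    by auto
  obtain x1 u1 y1 :: 'a where d1: "x1 \<noteq> u1" "u1 \<noteq> y1" "x1 \<noteq> y1" using assms(1) by blast
  have ne: "offdiag \<noteq> ({} :: ('a \<times> 'a) set)" using d1 by (auto simp: offdiag_def)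
  have leG: "nu g \<le> mu g" if "g \<in> Gset" for g using le that by (auto simp: preceq_def)
  have GCb: "g \<in> Cb" if "g \<in> Gset" for g using that by (auto simp: Gset_def)
  have eqPhi: "nu (Phi f) = mu (Phi f)" if "Phi f \<in> Cb" for f
  proof -
    have "nu (Phi f) \<le> mu (Phi f)" using leG[OF Phi_G[OF that]] .
    moreover have "nu (\<lambda>z. (-1) * Phi f z + 0 * Phi f z) \<le> mu (\<lambda>z. (-1) * Phi f z + 0 * Phi f z)"
      using leG[OF negPhi_G[OF that]] .
    ultimately show ?thesis using lin[OF rn that that, of "-1" 0] lin[OF assms(3) that that, of "-1" 0]
      by simp
  qed
  have lipPhi: "Phi f \<in> Cb" if lf: "f \<in> Lip0 x0" for f
  proof -
    obtain L where "\<forall>x y. \<bar>f x - f y\<bar> \<le> L * dist x y" using lf unfolding Lip0_def by blast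
    then show ?thesis by (rule Phi_Cb)
  qed
  have "adj_norm x0 mu \<le> fnorm nu"
    unfolding adj_norm_def
  proof (rule cSUP_least)
    have "(\<lambda>x. 0) \<in> Lip0 x0" unfolding Lip0_def by (auto intro!: exI[of _ 0])
    moreover have "lip_const (\<lambda>x::'a. 0::real) \<le> 1"
      unfolding lip_const_def by (rule cSUP_least) (use ne in auto)
    ultimately have "(\<lambda>x::'a. 0::real) \<in> {f \<in> Lip0 x0. lip_const f \<le> 1}" by simp
    then show "{f \<in> Lip0 x0. lip_const f \<le> 1} \<noteq> {}" by (rule ex_in_nonempty)
  next
    fix f assume "f \<in> {f \<in> Lip0 x0. lip_const f \<le> 1}"
    then have f: "f \<in> Lip0 x0" "lip_const f \<le> 1" by auto
    show "\<bar>mu (Phi f)\<bar> \<le> fnorm nu"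
      using fnorm_ge[OF rn pn lipPhi[OF f(1)]] f(2) eqPhi[OF lipPhi[OF f(1)]]
      by (simp add: supnorm_Phi)
  qed
  moreover have "supnorm (ind1 :: 'a \<times> 'a \<Rightarrow> real) \<le> 1"
    unfolding supnorm_def by (rule cSUP_least) (use ne in \<open>auto simp: ind1_def\<close>)
  then have "mu ind1 \<le> fnorm mu" using fnorm_ge[OF assms(3,4) one_Cb] by simp
  moreover have "fnorm nu \<le> nu ind1" by (rule fnorm_le[OF rn pn ne])
  moreover have "nu ind1 \<le> mu ind1" by (rule leG[OF one_G])
  ultimately have onesame: "nu ind1 = mu ind1" using assms(5) by linarith
  show "preceq mu nu"
    unfolding preceq_def
  proof
    fix g :: "'a \<times> 'a \<Rightarrow> real" assume gG: "g \<in> Gset"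
    have gC: "g \<in> Cb" by (rule GCb[OF gG])
    obtain B where B: "\<And>z. \<bar>g z\<bar> \<le> B" using Cb_bound[OF gC] by blast
    have B0: "0 \<le> B" using B[of undefined] by linarith
    define ga where "ga = gamma_M TYPE('a)"
    have ga1: "ga > 1" using assms(2) by (simp add: ga_def)
    define K where "K = B * (ga + 1) / (ga - 1)"
    have KB: "K * (ga - 1) = B * (ga + 1)" using ga1 by (simp add: K_def)
    have KgeB: "K - B \<ge> 0"
    proof -
      have "B * (ga + 1) \<ge> B * (ga - 1)" using B0 by (intro mult_left_mono) auto
      then have "K * (ga - 1) \<ge> B * (ga - 1)" using KB by simp
      then show ?thesis using ga1 by (simp add: mult_le_cancel_right)
    qed
    define h where "h = (\<lambda>z. K * ind1 z + (-1) * g z)"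
    have hC: "h \<in> Cb" unfolding h_def by (rule Cb_lin[OF one_Cb gC])
    have hG: "h \<in> Gset"
      unfolding Gset_def
    proof (intro CollectI conjI hC allI impI)
      fix x u y :: 'a assume dd: "x \<noteq> u \<and> u \<noteq> y \<and> x \<noteq> y"
      define t where "t = dist x y"
      define a where "a = dist x u"
      define c where "c = dist u y"
      have t0: "t > 0" using dd by (simp add: t_def)
      have a0: "a \<ge> 0" "c \<ge> 0" by (auto simp: a_def c_def)
      have "ga \<le> (a + c) / t" using gamma_le[of x u y] dd by (simp add: ga_def a_def c_def t_def)
      then have st: "ga * t \<le> a + c" using t0 by (simp add: le_divide_eq)
      have g1: "- g (x, y) \<le> B" "g (x, u) \<le> B" "g (u, y) \<le> B"
        using B[of "(x,y)"] B[of "(x,u)"] B[of "(u,y)"] by (simp_all add: abs_le_iff)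
      have "t * (- g (x, y)) \<le> t * B" using t0 g1(1) by (intro mult_left_mono) auto
      then have e1: "- (t * g (x, y)) \<le> t * B" by simp
      have e2: "a * g (x, u) \<le> a * B" using a0 g1(2) by (intro mult_left_mono) auto
      have e3: "c * g (u, y) \<le> c * B" using a0 g1(3) by (intro mult_left_mono) auto
      have e4: "(K - B) * (ga * t) \<le> (K - B) * (a + c)" using st KgeB by (rule mult_left_mono)
      have "(K - B) * ga = K + B" using KB by (simp add: algebra_simps)
      then have e5: "(K - B) * (ga * t) = (K + B) * t" by (subst mult.assoc[symmetric]) simp
      have main: "t * (K - g (x, y)) \<le> a * (K - g (x, u)) + c * (K - g (u, y))"
      proof -
        have e6: "(K + B) * t \<le> (K - B) * (a + c)" using e4 e5 by simp
        have q1: "(K + B) * t = K * t + B * t" by (rule distrib_right)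
        have q2: "(K - B) * (a + c) = K * a + K * c - (B * a + B * c)"
          by (simp add: algebra_simps)
        have q3: "t * (K - g (x, y)) = K * t - t * g (x, y)" by (simp add: algebra_simps)
        have q4: "a * (K - g (x, u)) = K * a - a * g (x, u)" by (simp add: algebra_simps)
        have q5: "c * (K - g (u, y)) = K * c - c * g (u, y)" by (simp add: algebra_simps)
        have q6: "t * B = B * t" "a * B = B * a" "c * B = B * c" by simp_all
        show ?thesis unfolding q3 q4 q5 using e1 e2 e3 e6 q1 q2 q6 by linarith
      qed
      have main': "dist x y * (K - g (x, y)) \<le> dist x u * (K - g (x, u)) + dist u y * (K - g (u, y))"
        using main by (simp only: t_def a_def c_def)
      have o1: "ind1 (x, y) = (1::real)" "ind1 (x, u) = (1::real)" "ind1 (u, y) = (1::real)"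
        using dd unfolding ind1_def by auto
      have hx: "h (x, y) = K - g (x, y)" "h (x, u) = K - g (x, u)" "h (u, y) = K - g (u, y)"
        unfolding h_def o1 by simp_all
      show "dist x y * h (x, y) \<le> dist x u * h (x, u) + dist u y * h (u, y)"
        unfolding hx by (rule main')
    qed
    have "nu h \<le> mu h" by (rule leG[OF hG])
    then have "K * nu ind1 + (-1) * nu g \<le> K * mu ind1 + (-1) * mu g"
      unfolding h_def lin[OF rn one_Cb gC] lin[OF assms(3) one_Cb gC] .
    then show "mu g \<le> nu g" using onesame by simp
  qed
qed

end
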